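(* Let $A|H$, $B|K$ be conditional events with $AH\neq\emptyset$, and let $\Pi$ be the set of coherent assessments $(x,y)$ on $\{A|H,B|K\}$. The following are equivalent: (a) $\{A|H\}$ p-entails $B|K$; (b) $A|H\subseteq B|K$ or $K\subseteq B$; (c) $\Pi\subseteq\{(x,y)\in[0,1]^2:x\le y\}$. *)

theory Defs
  imports Complex_Main
begin

text \<open>Events are subsets of a set of possible worlds (the type 'w); a conditional
  event E|H is represented by the pair (E, H), with H nonempty.
  Indicator of an event at a world.\<close>

definition ind :: "'w set \<Rightarrow> 'w \<Rightarrow> real" where
  "ind E w = (if w \<in> E then 1 else 0)"

text \<open>Coherence (de Finetti betting scheme) of an assessment p on a finite family
  F of conditional events indexed by I: for every nonempty subfamily J and every
  choice of real stakes s, the random gain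
  sum over j in J of s_j * H_j * (E_j - p_j), restricted to the disjunction of the
  conditioning events of J, is not negative in all worlds of that disjunction.\<close>

definition coherent :: "'i set \<Rightarrow> ('i \<Rightarrow> 'w set \<times> 'w set) \<Rightarrow> ('i \<Rightarrow> real) \<Rightarrow> bool" where
  "coherent I F p \<longleftrightarrow>
     (\<forall>J. J \<subseteq> I \<longrightarrow> J \<noteq> {} \<longrightarrow>
        (\<forall>s :: 'i \<Rightarrow> real. \<exists>w \<in> (\<Union>j\<in>J. snd (F j)).
           (\<Sum>j\<in>J. s j * ind (snd (F j)) w * (ind (fst (F j)) w - p j)) \<ge> 0))"

definition pair_family :: "'w set \<Rightarrow> 'w set \<Rightarrow> 'w set \<Rightarrow> 'w set \<Rightarrow> nat \<Rightarrow> 'w set \<times> 'w set" where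
  "pair_family A H B K = (\<lambda>i. if i = 0 then (A, H) else (B, K))"

definition coherent_set :: "'w set \<Rightarrow> 'w set \<Rightarrow> 'w set \<Rightarrow> 'w set \<Rightarrow> (real \<times> real) set" where
  "coherent_set A H B K =
     {(x, y). coherent {0, 1} (pair_family A H B K) (\<lambda>i. if i = 0 then x else y)}"

definition p_consistent1 :: "'w set \<Rightarrow> 'w set \<Rightarrow> bool" where
  "p_consistent1 A H \<longleftrightarrow> coherent {0::nat} (\<lambda>_. (A, H)) (\<lambda>_. 1)"

definition p_entails1 :: "'w set \<Rightarrow> 'w set \<Rightarrow> 'w set \<Rightarrow> 'w set \<Rightarrow> bool" where
  "p_entails1 A H B K \<longleftrightarrow> p_consistent1 A H \<and>
     (\<forall>x y. (x, y) \<in> coherent_set A H B K \<longrightarrow> x = 1 \<longrightarrow> y = 1)"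

definition cond_incl :: "'w set \<Rightarrow> 'w set \<Rightarrow> 'w set \<Rightarrow> 'w set \<Rightarrow> bool" where
  "cond_incl A H B K \<longleftrightarrow> A \<inter> H \<subseteq> B \<inter> K \<and> (- B) \<inter> K \<subseteq> (- A) \<inter> H"

end

theory Submission
  imports Defs
begin

lemma subsets01: "J \<subseteq> {0::nat,1} \<Longrightarrow> J \<noteq> {} \<Longrightarrow> J = {0} \<or> J = {1} \<or> J = {0,1}"
  by auto

lemma pf0[simp]: "pair_family A H B K 0 = (A, H)" by (simp add: pair_family_def)
lemma pf1[simp]: "pair_family A H B K (Suc 0) = (B, K)" by (simp add: pair_family_def)

lemma coh_elim:
  assumes "coherent {0,1} (pair_family A H B K) p"
  shows "\<exists>w\<in>H. s * ind H w * (ind A w - p 0) \<ge> 0"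
    and "\<exists>w\<in>K. s * ind K w * (ind B w - p 1) \<ge> 0"
    and "\<exists>w\<in>H \<union> K. s0 * ind H w * (ind A w - p 0) + s1 * ind K w * (ind B w - p 1) \<ge> 0"
proof -
  have C: "\<And>J s. J \<subseteq> {0,1} \<Longrightarrow> J \<noteq> {} \<Longrightarrow> \<exists>w \<in> (\<Union>j\<in>J. snd (pair_family A H B K j)).
           (\<Sum>j\<in>J. s j * ind (snd (pair_family A H B K j)) w * (ind (fst (pair_family A H B K j)) w - p j)) \<ge> 0"
    using assms unfolding coherent_def by blast
  from C[of "{0}" "\<lambda>_. s"] show "\<exists>w\<in>H. s * ind H w * (ind A w - p 0) \<ge> 0" by simp
  from C[of "{1}" "\<lambda>_. s"] show "\<exists>w\<in>K. s * ind K w * (ind B w - p 1) \<ge> 0" by simp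
  from C[of "{0,1}" "\<lambda>i. if i = 0 then s0 else s1"]
  show "\<exists>w\<in>H \<union> K. s0 * ind H w * (ind A w - p 0) + s1 * ind K w * (ind B w - p 1) \<ge> 0" by simp
qed

lemma coh_intro:
  assumes "w0 \<in> H" "ind H w0 * (ind A w0 - p 0) = 0"
    and "w1 \<in> K" "ind K w1 * (ind B w1 - p 1) = 0"
    and "w2 \<in> H \<union> K" "ind H w2 * (ind A w2 - p 0) = 0" "ind K w2 * (ind B w2 - p 1) = 0"
  shows "coherent {0,1} (pair_family A H B K) p"
  unfolding coherent_def
proof (intro allI impI)
  fix J :: "nat set" and s :: "nat \<Rightarrow> real"
  assume "J \<subseteq> {0,1}" "J \<noteq> {}"
  then consider "J = {0}" | "J = {1}" | "J = {0,1}" using subsets01 by blast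
  then show "\<exists>w \<in> (\<Union>j\<in>J. snd (pair_family A H B K j)).
           (\<Sum>j\<in>J. s j * ind (snd (pair_family A H B K j)) w * (ind (fst (pair_family A H B K j)) w - p j)) \<ge> 0"
  proof cases
    case 1 then show ?thesis using assms(1,2) by (intro bexI[of _ w0]) (auto simp: mult.assoc)
  next
    case 2 then show ?thesis using assms(3,4) by (intro bexI[of _ w1]) (auto simp: mult.assoc)
  next
    case 3 then show ?thesis using assms(5-7) by (intro bexI[of _ w2]) (auto simp: mult.assoc)
  qed
qed

theorem theorem4:
  fixes A H B K :: "'w set"
  assumes "A \<inter> H \<noteq> {}" and "K \<noteq> {}"
  shows "(p_entails1 A H B K \<longleftrightarrow> (cond_incl A H B K \<or> K \<subseteq> B))
       \<and> ((cond_incl A H B K \<or> K \<subseteq> B) \<longleftrightarrow>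
            coherent_set A H B K \<subseteq> {(x, y). 0 \<le> x \<and> x \<le> 1 \<and> 0 \<le> y \<and> y \<le> 1 \<and> x \<le> y})"
proof -
  obtain a where a: "a \<in> A" "a \<in> H" using assms(1) by blast
  obtain k where k: "k \<in> K" using assms(2) by blast
  have bounds: "0 \<le> x \<and> x \<le> 1 \<and> 0 \<le> y \<and> y \<le> 1" if "(x, y) \<in> coherent_set A H B K" for x y
  proof -
    let ?p = "\<lambda>i::nat. if i = 0 then x else y"
    have c: "coherent {0,1} (pair_family A H B K) ?p" using that by (simp add: coherent_set_def)
    from coh_elim(1)[OF c, of 1] obtain w where "w \<in> H" "1 * ind H w * (ind A w - x) \<ge> 0" by auto
    hence x1: "x \<le> 1" by (auto simp: ind_def split: if_splits)
    from coh_elim(1)[OF c, of "-1"] obtain w where "w \<in> H" "-1 * ind H w * (ind A w - x) \<ge> 0" by auto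
    hence x0: "0 \<le> x" by (auto simp: ind_def split: if_splits)
    from coh_elim(2)[OF c, of 1] obtain w where "w \<in> K" "1 * ind K w * (ind B w - y) \<ge> 0" by auto
    hence y1: "y \<le> 1" by (auto simp: ind_def split: if_splits)
    from coh_elim(2)[OF c, of "-1"] obtain w where "w \<in> K" "-1 * ind K w * (ind B w - y) \<ge> 0" by auto
    hence y0: "0 \<le> y" by (auto simp: ind_def split: if_splits)
    show ?thesis using x0 x1 y0 y1 by simp
  qed
  have bc: "x \<le> y" if b: "cond_incl A H B K \<or> K \<subseteq> B" and xy: "(x, y) \<in> coherent_set A H B K" for x y
  proof -
    let ?p = "\<lambda>i::nat. if i = 0 then x else y"
    have c: "coherent {0,1} (pair_family A H B K) ?p" using xy by (simp add: coherent_set_def)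
    note bd = bounds[OF xy]
    show ?thesis
    proof (cases "K \<subseteq> B")
      case True
      from coh_elim(2)[OF c, of "-1"] obtain w where "w \<in> K" "-1 * ind K w * (ind B w - y) \<ge> 0" by auto
      with True have "y \<ge> 1" by (auto simp: ind_def split: if_splits)
      with bd show ?thesis by simp
    next
      case False
      with b have ci: "A \<inter> H \<subseteq> B \<inter> K" "(- B) \<inter> K \<subseteq> (- A) \<inter> H" by (auto simp: cond_incl_def)
      show ?thesis
      proof (rule ccontr)
        assume "\<not> x \<le> y"
        hence lt: "y < x" by simp
        from coh_elim(3)[OF c, of 1 "-1"] obtain w where w: "w \<in> H \<union> K"
          "1 * ind H w * (ind A w - x) + -1 * ind K w * (ind B w - y) \<ge> 0" by auto
        show False using w ci lt bd
          by (cases "w \<in> H"; cases "w \<in> A"; cases "w \<in> K"; cases "w \<in> B"; auto simp: ind_def)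
      qed
    qed
  qed
  have cb: "cond_incl A H B K \<or> K \<subseteq> B" if nb: "\<not> (cond_incl A H B K \<or> K \<subseteq> B)"
    and "\<And>x y. (x, y) \<in> coherent_set A H B K \<Longrightarrow> x = 1 \<Longrightarrow> y = 1"
  proof -
    obtain k0 where k0: "k0 \<in> K" "k0 \<notin> B" using nb by blast
    obtain w2 where w2: "w2 \<in> H \<union> K" "w2 \<notin> H \<or> w2 \<in> A" "w2 \<notin> K \<or> w2 \<notin> B"
      using nb unfolding cond_incl_def by blast
    have "coherent {0,1} (pair_family A H B K) (\<lambda>i::nat. if i = 0 then 1 else 0)"
      apply (rule coh_intro[of a _ _ _ k0 _ _ w2])
      using a k0 w2 by (auto simp: ind_def)
    hence "(1, 0) \<in> coherent_set A H B K" by (simp add: coherent_set_def)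
    with that(2)[of 1 0] show ?thesis by simp
  qed
  have pc: "p_consistent1 A H"
    unfolding p_consistent1_def coherent_def
  proof (intro allI impI)
    fix J :: "nat set" and s :: "nat \<Rightarrow> real"
    assume "J \<subseteq> {0}" "J \<noteq> {}"
    hence "J = {0}" by auto
    thus "\<exists>w\<in>\<Union>j\<in>J. snd (A, H). 0 \<le> (\<Sum>j\<in>J. s j * ind (snd (A, H)) w * (ind (fst (A, H)) w - 1))"
      using a by (intro bexI[of _ a]) (auto simp: ind_def)
  qed
  have one: "p_entails1 A H B K \<longleftrightarrow> (cond_incl A H B K \<or> K \<subseteq> B)"
  proof
    assume "p_entails1 A H B K"
    then show "cond_incl A H B K \<or> K \<subseteq> B" using cb unfolding p_entails1_def by blast
  next
    assume b: "cond_incl A H B K \<or> K \<subseteq> B"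
    have "\<forall>x y. (x, y) \<in> coherent_set A H B K \<longrightarrow> x = 1 \<longrightarrow> y = 1"
      using bc[OF b] bounds by fastforce
    with pc show "p_entails1 A H B K" unfolding p_entails1_def by blast
  qed
  have two: "(cond_incl A H B K \<or> K \<subseteq> B) \<longleftrightarrow>
            coherent_set A H B K \<subseteq> {(x, y). 0 \<le> x \<and> x \<le> 1 \<and> 0 \<le> y \<and> y \<le> 1 \<and> x \<le> y}"
  proof
    assume b: "cond_incl A H B K \<or> K \<subseteq> B"
    show "coherent_set A H B K \<subseteq> {(x, y). 0 \<le> x \<and> x \<le> 1 \<and> 0 \<le> y \<and> y \<le> 1 \<and> x \<le> y}"
      using bc[OF b] bounds by auto
  next
    assume S: "coherent_set A H B K \<subseteq> {(x, y). 0 \<le> x \<and> x \<le> 1 \<and> 0 \<le> y \<and> y \<le> 1 \<and> x \<le> y}"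
    show "cond_incl A H B K \<or> K \<subseteq> B"
    proof (rule ccontr)
      assume nb: "\<not> ?thesis"
      have "\<And>x y. (x, y) \<in> coherent_set A H B K \<Longrightarrow> x = 1 \<Longrightarrow> y = 1"
        using S bounds by fastforce
      with cb nb show False by blast
    qed
  qed
  show ?thesis using one two by blast
qed

end
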